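(* Let $A$ be a cubic graph with $v(A)\equiv 0\pmod 6$, let $a\in V(A)$ with $N(a,A)=\{a_1,a_2,a_3\}$, and suppose $A$ has no $\Lambda$-factor containing the edge $e=aa_1$. Let $G=Y(A,a)$. Then $v(G)\equiv 0\pmod 6$ and $G$ has no $\Lambda$-factor.
   Context: Graphs are finite, undirected, without loops or multiple edges; $v(G)=|V(G)|$; $N(x,G)$ is the set of neighbours of $x$. $Y(A,a)$ is defined as follows: take three disjoint copies $A^1,A^2,A^3$ of $A$, where $a^i,a^i_1,a^i_2,a^i_3$ denote the copies in $A^i$ of $a,a_1,a_2,a_3$; form $(A^1-a^1)\cup(A^2-a^2)\cup(A^3-a^3)$ and add three new vertices $z_1,z_2,z_3$ and the nine new edges $z_ja^i_j$, $i,j\in\{1,2,3\}$. A $\Lambda$-factor of a graph is a spanning subgraph each of whose components is a path on 3 vertices; it contains an edge $e$ if $e$ is an edge of it. *)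

theory Defs
  imports Main
begin

definition simple_graph :: "'a set \<Rightarrow> 'a set set \<Rightarrow> bool" where
  "simple_graph V E \<longleftrightarrow> finite V \<and>
     (\<forall>e\<in>E. \<exists>x y. x \<in> V \<and> y \<in> V \<and> x \<noteq> y \<and> e = {x, y})"

definition nbhd :: "'a set set \<Rightarrow> 'a \<Rightarrow> 'a set" where
  "nbhd E x = {y. {x, y} \<in> E}"

definition cubic :: "'a set \<Rightarrow> 'a set set \<Rightarrow> bool" where
  "cubic V E \<longleftrightarrow> simple_graph V E \<and> (\<forall>x\<in>V. card (nbhd E x) = 3)"

definition comp :: "'a set set \<Rightarrow> 'a \<Rightarrow> 'a set" where
  "comp F x = {y. (\<lambda>u w. {u, w} \<in> F)\<^sup>*\<^sup>* x y}"

text \<open>F is (the edge set of) a Lambda-factor of (V,E): a spanning subgraph each of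
  whose components is a path on 3 vertices.\<close>
definition lambda_factor :: "'a set \<Rightarrow> 'a set set \<Rightarrow> 'a set set \<Rightarrow> bool" where
  "lambda_factor V E F \<longleftrightarrow> F \<subseteq> E \<and>
     (\<forall>x\<in>V. \<exists>u v w. comp F x = {u, v, w} \<and> u \<noteq> v \<and> v \<noteq> w \<and> u \<noteq> w \<and>
        {e\<in>F. e \<subseteq> {u, v, w}} = {{u, v}, {v, w}})"

datatype 'a yvert = Cp nat 'a | Zv nat

text \<open>Y(A,a) with the labelling a_1,a_2,a_3 of the neighbours of a.
  Copy i of vertex x is Cp i x, new vertices are Zv 1, Zv 2, Zv 3.\<close>
definition Y_V :: "'a set \<Rightarrow> 'a \<Rightarrow> 'a yvert set" where
  "Y_V V a = {Cp i x | i x. i \<in> {1,2,3} \<and> x \<in> V - {a}} \<union> {Zv j | j. j \<in> {1,2,3}}"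

definition Y_E :: "'a set set \<Rightarrow> 'a \<Rightarrow> 'a \<Rightarrow> 'a \<Rightarrow> 'a \<Rightarrow> 'a yvert set set" where
  "Y_E E a a1 a2 a3 =
     {{Cp i x, Cp i y} | i x y. i \<in> {1,2,3} \<and> {x, y} \<in> E \<and> x \<noteq> a \<and> y \<noteq> a}
     \<union> {{Zv j, Cp i ([a1, a2, a3] ! (j - 1))} | i j. i \<in> {1,2,3} \<and> j \<in> {1,2,3}}"

end

theory Submission
  imports Defs
begin

lemma comp_refl: "x \<in> comp F x"
  by (simp add: comp_def)

lemma nb_comp: "{x,y} \<in> F \<Longrightarrow> y \<in> comp F x"
  unfolding comp_def by (simp add: r_into_rtranclp)

lemma comp_trans: "y \<in> comp F x \<Longrightarrow> z \<in> comp F y \<Longrightarrow> z \<in> comp F x"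
  unfolding comp_def by (auto intro: rtranclp_trans)

lemma comp_sym: "y \<in> comp F x \<Longrightarrow> x \<in> comp F y"
  unfolding comp_def mem_Collect_eq
proof (induction rule: rtranclp_induct)
  case base then show ?case by simp
next
  case (step y z)
  have "{z,y} \<in> F" using step(2) by (simp add: insert_commute)
  then show ?case using step(3) by (rule converse_rtranclp_into_rtranclp)
qed

lemma comp_eq: "y \<in> comp F x \<Longrightarrow> comp F y = comp F x"
  by (meson comp_sym comp_trans subsetI subset_antisym)

lemma comp_closed:
  assumes "x \<in> S" "\<forall>y\<in>S. nbhd F y \<subseteq> S"
  shows "comp F x \<subseteq> S"
proof
  fix z assume "z \<in> comp F x"
  then have "(\<lambda>u w. {u, w} \<in> F)\<^sup>*\<^sup>* x z" by (simp add: comp_def)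
  then show "z \<in> S"
  proof (induction rule: rtranclp_induct)
    case base then show ?case using assms by simp
  next
    case (step y z) then show ?case using assms(2) by (auto simp: nbhd_def)
  qed
qed

lemma lf_local:
  assumes lf: "lambda_factor V E F" and E2: "\<forall>e\<in>E. \<exists>x y. x\<noteq>y \<and> e={x,y}" and x: "x \<in> V"
  shows "\<exists>u v w. comp F x = {u,v,w} \<and> u\<noteq>v \<and> v\<noteq>w \<and> u\<noteq>w \<and>
     nbhd F u = {v} \<and> nbhd F v = {u,w} \<and> nbhd F w = {v}"
proof -
  have FE: "F \<subseteq> E" using lf by (simp add: lambda_factor_def)
  have "\<forall>x\<in>V. \<exists>u v w. comp F x = {u, v, w} \<and> u \<noteq> v \<and> v \<noteq> w \<and> u \<noteq> w \<and>
        {e\<in>F. e \<subseteq> {u, v, w}} = {{u, v}, {v, w}}" using lf unfolding lambda_factor_def by (rule conjunct2)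
  then have "\<exists>u v w. comp F x = {u, v, w} \<and> u \<noteq> v \<and> v \<noteq> w \<and> u \<noteq> w \<and>
        {e\<in>F. e \<subseteq> {u, v, w}} = {{u, v}, {v, w}}" using x by (rule bspec)
  then obtain u v w where c: "comp F x = {u,v,w}" and d: "u \<noteq> v" "v \<noteq> w" "u \<noteq> w"
    and H: "{e\<in>F. e \<subseteq> {u, v, w}} = {{u, v}, {v, w}}" by (elim exE conjE)
  have noloop: "{p} \<notin> F" for p
  proof
    assume "{p} \<in> F" then obtain s t where st: "s \<noteq> t" "{p} = {s,t}" using FE E2 by blast
    then have "s \<in> {p}" "t \<in> {p}" by (simp_all only: insertI1 insertI2)
    then show False using st(1) by simp
  qed
  have cc: "comp F y = {u,v,w}" if "y \<in> {u,v,w}" for y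
    using comp_eq[of y F x] c that by simp
  have "{u,v} \<in> {e\<in>F. e \<subseteq> {u, v, w}}" "{v,w} \<in> {e\<in>F. e \<subseteq> {u, v, w}}" using H by simp_all
  then have inF: "{u,v} \<in> F" "{v,w} \<in> F" by simp_all
  have key: "{y,z} \<in> F \<Longrightarrow> y \<in> {u,v,w} \<Longrightarrow> {y,z} = {u,v} \<or> {y,z} = {v,w}" for y z
  proof -
    assume a: "{y,z} \<in> F" "y \<in> {u,v,w}"
    have "z \<in> {u,v,w}" using nb_comp[OF a(1)] cc[OF a(2)] by simp
    then have "{y,z} \<in> {e\<in>F. e \<subseteq> {u, v, w}}" using a by auto
    then show ?thesis using H by simp
  qed
  have nz: "{y,z} \<in> F \<Longrightarrow> y \<noteq> z" for y z using noloop by auto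
  have mem: "z \<in> {p,q}" if "{y,z} = {p,q}" for y z p q
  proof -
    have "z \<in> {y,z}" by simp
    then show ?thesis using that by simp
  qed
  have mem1: "y \<in> {p,q}" if "{y,z} = {p,q}" for y z p q
  proof -
    have "y \<in> {y,z}" by simp
    then show ?thesis using that by simp
  qed
  have "nbhd F u = {v}"
  proof (rule set_eqI, rule iffI)
    fix z assume "z \<in> nbhd F u"
    then have z: "{u,z} \<in> F" by (simp add: nbhd_def)
    have "u \<noteq> z" using nz[OF z] .
    have "u \<in> {u,v,w}" by simp
    from key[OF z this] show "z \<in> {v}"
    proof
      assume "{u,z} = {u,v}" then have "z \<in> {u,v}" by (rule mem)
      then show ?thesis using \<open>u \<noteq> z\<close> by simp
    next
      assume "{u,z} = {v,w}" then have "u \<in> {v,w}" by (rule mem1)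
      then show ?thesis using d by simp
    qed
  next
    fix z assume "z \<in> {v}" then show "z \<in> nbhd F u" using inF by (simp add: nbhd_def)
  qed
  moreover have "nbhd F w = {v}"
  proof (rule set_eqI, rule iffI)
    fix z assume "z \<in> nbhd F w"
    then have z: "{w,z} \<in> F" by (simp add: nbhd_def)
    have "w \<noteq> z" using nz[OF z] .
    have "w \<in> {u,v,w}" by simp
    from key[OF z this] show "z \<in> {v}"
    proof
      assume "{w,z} = {u,v}" then have "w \<in> {u,v}" by (rule mem1)
      then show ?thesis using d by simp
    next
      assume "{w,z} = {v,w}" then have "z \<in> {v,w}" by (rule mem)
      then show ?thesis using \<open>w \<noteq> z\<close> by simp
    qed
  next
    fix z assume "z \<in> {v}"
    moreover have "{w,v} = {v,w}" by blast
    ultimately show "z \<in> nbhd F w" using inF by (simp add: nbhd_def)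
  qed
  moreover have "nbhd F v = {u,w}"
  proof (rule set_eqI, rule iffI)
    fix z assume "z \<in> nbhd F v"
    then have z: "{v,z} \<in> F" by (simp add: nbhd_def)
    have "v \<noteq> z" using nz[OF z] .
    have "v \<in> {u,v,w}" by simp
    from key[OF z this] show "z \<in> {u,w}"
    proof
      assume "{v,z} = {u,v}" then have "z \<in> {u,v}" by (rule mem)
      then show ?thesis using \<open>v \<noteq> z\<close> by simp
    next
      assume "{v,z} = {v,w}" then have "z \<in> {v,w}" by (rule mem)
      then show ?thesis using \<open>v \<noteq> z\<close> by simp
    qed
  next
    fix z assume "z \<in> {u,w}"
    moreover have "{v,u} = {u,v}" by blast
    ultimately show "z \<in> nbhd F v" using inF by (auto simp: nbhd_def)
  qed
  ultimately show ?thesis using c d by blast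
qed

lemma local_lf:
  assumes FE: "F \<subseteq> E" and F2: "\<forall>e\<in>F. \<exists>x y. x\<noteq>y \<and> e={x,y}"
    and loc: "\<forall>x\<in>V. \<exists>u v w. x \<in> {u,v,w} \<and> u\<noteq>v \<and> v\<noteq>w \<and> u\<noteq>w \<and>
     nbhd F u = {v} \<and> nbhd F v = {u,w} \<and> nbhd F w = {v}"
  shows "lambda_factor V E F"
  unfolding lambda_factor_def
proof (intro conjI FE ballI)
  fix x assume "x \<in> V"
  with loc have "\<exists>u v w. x \<in> {u,v,w} \<and> u\<noteq>v \<and> v\<noteq>w \<and> u\<noteq>w \<and>
     nbhd F u = {v} \<and> nbhd F v = {u,w} \<and> nbhd F w = {v}" by (rule bspec)
  then obtain u v w where x: "x \<in> {u,v,w}" and d: "u\<noteq>v" "v\<noteq>w" "u\<noteq>w"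
    and nu: "nbhd F u = {v}" and nv: "nbhd F v = {u,w}" and nw: "nbhd F w = {v}"
    by (elim exE conjE)
  have e1: "{u,v} \<in> F" using nu by (simp add: nbhd_def set_eq_iff)
  have "{w,v} \<in> F" using nw by (simp add: nbhd_def set_eq_iff)
  moreover have "{w,v} = {v,w}" by blast
  ultimately have e2: "{v,w} \<in> F" by simp
  have sub: "comp F x \<subseteq> {u,v,w}"
    by (rule comp_closed[OF x]) (simp add: nu nv nw)
  have "v \<in> comp F u" "w \<in> comp F u" "u \<in> comp F u"
    using nb_comp[OF e1] comp_trans[OF nb_comp[OF e1] nb_comp[OF e2]] comp_refl by auto
  then have "{u,v,w} \<subseteq> comp F u" by auto
  moreover have "x \<in> comp F u" using \<open>{u,v,w} \<subseteq> comp F u\<close> x by (rule subsetD)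
  moreover have "comp F x = comp F u" using comp_eq[OF calculation(2)] .
  have c1: "{u,v,w} \<subseteq> comp F x" unfolding \<open>comp F x = comp F u\<close> by fact
  have c: "comp F x = {u,v,w}" using sub c1 by (rule subset_antisym)
  have H: "{e\<in>F. e \<subseteq> {u, v, w}} = {{u, v}, {v, w}}"
  proof (rule set_eqI, rule iffI)
    fix e assume e: "e \<in> {e\<in>F. e \<subseteq> {u, v, w}}"
    then have eF: "e \<in> F" and es: "e \<subseteq> {u,v,w}" by simp_all
    have "\<exists>x y. x\<noteq>y \<and> e={x,y}" using F2 eF by (rule bspec)
    then obtain p q where pq: "p \<noteq> q" "e = {p,q}" by (elim exE conjE)
    have "p \<in> e" using pq(2) by simp
    with es have p3: "p \<in> {u,v,w}" by (rule subsetD)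
    have q: "q \<in> nbhd F p" using eF pq(2) by (simp add: nbhd_def)
    have sw1: "{w,v} = {v,w}" by (rule insert_commute)
    have sw2: "{v,u} = {u,v}" by (rule insert_commute)
    from p3 show "e \<in> {{u, v}, {v, w}}"
    proof (elim insertE)
      assume "p = u" then have "q = v" using q nu by simp
      then show ?thesis using pq(2) \<open>p = u\<close> by simp
    next
      assume "p = v" then have "q = u \<or> q = w" using q nv by simp
      then show ?thesis
      proof
        assume "q = u" then show ?thesis using pq(2) \<open>p = v\<close> sw2 by simp
      next
        assume "q = w" then show ?thesis using pq(2) \<open>p = v\<close> by simp
      qed
    next
      assume "p = w" then have "q = v" using q nw by simp
      then show ?thesis using pq(2) \<open>p = w\<close> sw1 by simp
    qed simp
  next
    fix e assume "e \<in> {{u, v}, {v, w}}"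
    then have "e = {u,v} \<or> e = {v,w}" by simp
    then show "e \<in> {e\<in>F. e \<subseteq> {u, v, w}}"
    proof
      assume "e = {u,v}" then show ?thesis using e1 by simp
    next
      assume "e = {v,w}" then show ?thesis using e2 by simp
    qed
  qed
  show "\<exists>u v w. comp F x = {u, v, w} \<and> u \<noteq> v \<and> v \<noteq> w \<and> u \<noteq> w \<and>
        {e \<in> F. e \<subseteq> {u, v, w}} = {{u, v}, {v, w}}" using c d H by (intro exI conjI)
qed

lemma orNot: "A \<or> B \<Longrightarrow> \<not> B \<Longrightarrow> A" by blast

lemma arith1: "3 dvd (u::nat) \<Longrightarrow> u = (n-1) - b \<Longrightarrow> b \<le> n - 1 \<Longrightarrow> 0 < n \<Longrightarrow> n mod 6 = 0 \<Longrightarrow> b mod 3 = (2::nat)"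
  by presburger

lemma arith2: "(x::nat) mod 3 = 2 \<Longrightarrow> y mod 3 = 2 \<Longrightarrow> z mod 3 = 2 \<Longrightarrow> x + y + z \<le> 6 \<Longrightarrow> x = 2"
  by presburger

lemma nbhd_insert: "nbhd (insert {p,q} F) z = nbhd F z \<union> (if z = p then {q} else {}) \<union> (if z = q then {p} else {})"
  unfolding nbhd_def by (auto simp: doubleton_eq_iff)


locale ysetup =
  fixes V :: "'a set" and E :: "'a set set" and a a1 a2 a3 :: 'a and F :: "'a yvert set set"
  assumes cub: "cubic V E" and av: "a \<in> V"
    and d12: "a1 \<noteq> a2" and d13: "a1 \<noteq> a3" and d23: "a2 \<noteq> a3"
    and nba: "nbhd E a = {a1, a2, a3}"
    and lf: "lambda_factor (Y_V V a) (Y_E E a a1 a2 a3) F"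
begin

definition idx :: "nat \<Rightarrow> 'a" where "idx j = [a1,a2,a3] ! (j - 1)"

lemma finV: "finite V" using cub by (simp add: cubic_def simple_graph_def)

lemma Eedge: "{x,y} \<in> E \<Longrightarrow> x \<in> V \<and> y \<in> V \<and> x \<noteq> y"
proof -
  assume "{x,y} \<in> E"
  then obtain p q where "p \<in> V" "q \<in> V" "p \<noteq> q" "{x,y} = {p,q}"
    using cub by (auto simp: cubic_def simple_graph_def)
  then show ?thesis by (auto simp: doubleton_eq_iff)
qed

lemma E2: "\<forall>e\<in>E. \<exists>x y. x\<noteq>y \<and> e={x,y}"
  using cub unfolding cubic_def simple_graph_def by fast

lemma idx_simps: "idx 1 = a1" "idx 2 = a2" "idx 3 = a3" by (simp_all add: idx_def)

lemma idx_in: "j \<in> {1,2,3} \<Longrightarrow> idx j \<in> {a1,a2,a3}"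
  by (elim insertE) (simp_all add: idx_def)

lemma idx_E: "j \<in> {1,2,3} \<Longrightarrow> {a, idx j} \<in> E"
proof -
  assume "j \<in> {1,2,3}"
  then have "idx j \<in> nbhd E a" unfolding nba by (rule idx_in)
  then show ?thesis by (simp add: nbhd_def)
qed

lemma idx_V: "j \<in> {1,2,3} \<Longrightarrow> idx j \<in> V \<and> idx j \<noteq> a"
  using Eedge[OF idx_E] by metis

lemma idx_inj: "j \<in> {1,2,3} \<Longrightarrow> j' \<in> {1,2,3} \<Longrightarrow> idx j = idx j' \<Longrightarrow> j = j'"
  using d12 d13 d23 by (auto simp: idx_def)

abbreviation "YV \<equiv> Y_V V a"
abbreviation "YE \<equiv> Y_E E a a1 a2 a3"

lemma YE_alt: "YE = {{Cp i x, Cp i y} | i x y. i \<in> {1,2,3} \<and> {x, y} \<in> E \<and> x \<noteq> a \<and> y \<noteq> a}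
     \<union> {{Zv j, Cp i (idx j)} | i j. i \<in> {1,2,3} \<and> j \<in> {1,2,3}}"
  by (simp add: Y_E_def idx_def)

lemma YV_Cp: "Cp i x \<in> YV \<longleftrightarrow> i \<in> {1,2,3} \<and> x \<in> V \<and> x \<noteq> a"
  by (auto simp: Y_V_def)
lemma YV_Zv: "Zv j \<in> YV \<longleftrightarrow> j \<in> {1,2,3}"
  by (auto simp: Y_V_def)

lemma adjZ: "{Zv j, z} \<in> YE \<Longrightarrow> j \<in> {1,2,3} \<and> (\<exists>i\<in>{1,2,3}. z = Cp i (idx j))"
proof -
  assume h: "{Zv j, z} \<in> YE"
  show ?thesis
  proof (cases "\<exists>i x y. {Zv j, z} = {Cp i x, Cp i y}")
    case True then show ?thesis by (auto simp: doubleton_eq_iff)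
  next
    case False
    then obtain i j' where "{Zv j, z} = {Zv j', Cp i (idx j')}" "i \<in> {1,2,3}" "j' \<in> {1,2,3}"
      using h unfolding YE_alt by blast
    then show ?thesis by (auto simp: doubleton_eq_iff)
  qed
qed

lemma adjC: "{Cp i x, z} \<in> YE \<Longrightarrow> i \<in> {1,2,3} \<and> x \<noteq> a \<and> x \<in> V \<and>
   ((\<exists>y. z = Cp i y \<and> {x,y} \<in> E \<and> y \<noteq> a \<and> y \<in> V) \<or> (\<exists>j\<in>{1,2,3}. z = Zv j \<and> x = idx j))"
proof -
  assume h: "{Cp i x, z} \<in> YE"
  show ?thesis
  proof (cases "\<exists>i' j. {Cp i x, z} = {Zv j, Cp i' (idx j)} \<and> i' \<in> {1,2,3} \<and> j \<in> {1,2,3}")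
    case True
    then obtain i' j where e: "{Cp i x, z} = {Zv j, Cp i' (idx j)}" "i' \<in> {1,2,3}" "j \<in> {1,2,3}" by blast
    then have "i = i'" "x = idx j" "z = Zv j" by (auto simp: doubleton_eq_iff)
    then show ?thesis using e idx_V[of j] by blast
  next
    case False
    then obtain i' x' y' where e: "{Cp i x, z} = {Cp i' x', Cp i' y'}" "i' \<in> {1,2,3}" "{x',y'} \<in> E" "x' \<noteq> a" "y' \<noteq> a"
      using h unfolding YE_alt by blast
    have V: "x' \<in> V" "y' \<in> V" using Eedge[OF e(3)] by auto
    from e(1) have "(i = i' \<and> x = x' \<and> z = Cp i' y') \<or> (i = i' \<and> x = y' \<and> z = Cp i' x')"
      by (auto simp: doubleton_eq_iff)
    then show ?thesis
    proof
      assume "i = i' \<and> x = x' \<and> z = Cp i' y'"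
      then show ?thesis using e V by blast
    next
      assume "i = i' \<and> x = y' \<and> z = Cp i' x'"
      moreover have "{y',x'} \<in> E" using e(3) by (simp add: insert_commute)
      ultimately show ?thesis using e V by blast
    qed
  qed
qed

lemma YE2: "\<forall>e\<in>YE. \<exists>x y. x\<noteq>y \<and> e={x,y}"
proof
  fix e assume "e \<in> YE"
  then consider (a) i x y where "e = {Cp i x, Cp i y}" "{x,y} \<in> E"
    | (b) i j where "e = {Zv j, Cp i (idx j)}" unfolding YE_alt by blast
  then show "\<exists>x y. x\<noteq>y \<and> e={x,y}"
  proof cases
    case a then have "x \<noteq> y" using Eedge by blast
    then show ?thesis using a by blast
  next
    case b then show ?thesis by blast
  qed
qed

lemma FYE: "F \<subseteq> YE" using lf by (simp add: lambda_factor_def)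

lemma loc: "x \<in> YV \<Longrightarrow> \<exists>u v w. comp F x = {u,v,w} \<and> u\<noteq>v \<and> v\<noteq>w \<and> u\<noteq>w \<and>
     nbhd F u = {v} \<and> nbhd F v = {u,w} \<and> nbhd F w = {v}"
  by (rule lf_local[OF lf YE2])

lemma loc2: "x \<in> YV \<Longrightarrow> \<exists>u v w. comp F x = {u,v,w} \<and> u\<noteq>v \<and> v\<noteq>w \<and> u\<noteq>w \<and>
     nbhd F u = {v} \<and> nbhd F v = {u,w} \<and> nbhd F w = {v} \<and> (x = u \<or> x = v)"
proof -
  assume "x \<in> YV"
  from loc[OF this] obtain u v w where h: "comp F x = {u,v,w}" "u\<noteq>v" "v\<noteq>w" "u\<noteq>w"
     "nbhd F u = {v}" "nbhd F v = {u,w}" "nbhd F w = {v}" by (elim exE conjE)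
  have "x \<in> comp F x" by (rule comp_refl)
  then have "x \<in> {u,v,w}" unfolding h(1) .
  then have "x = u \<or> x = v \<or> x = w" by simp
  then consider "x = u \<or> x = v" | "x = w" by (elim disjE) simp_all
  then show ?thesis
  proof cases
    case 1
    show ?thesis apply (rule exI[of _ u], rule exI[of _ v], rule exI[of _ w]) using h 1 by simp
  next
    case 2
    have "{u,v,w} = {w,v,u}" by (simp add: insert_commute)
    then have c: "comp F x = {w,v,u}" using h(1) by simp
    have sw: "{w,u} = {u,w}" by (rule insert_commute)
    show ?thesis apply (rule exI[of _ w], rule exI[of _ v], rule exI[of _ u]) using c h 2 sw by simp
  qed
qed

lemma card3: "x \<in> YV \<Longrightarrow> card (comp F x) = 3 \<and> finite (comp F x)"
proof -
  assume "x \<in> YV"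
  from loc[OF this] obtain u v w where "comp F x = {u,v,w}" "u\<noteq>v" "v\<noteq>w" "u\<noteq>w" by (elim exE conjE)
  then show ?thesis by simp
qed

lemma stay:
  assumes "x \<in> V" "x \<noteq> a" "i \<in> {1,2,3}" "y \<in> comp F (Cp i x)"
  shows "(\<exists>x'. y = Cp i x' \<and> x' \<in> V \<and> x' \<noteq> a) \<or> (\<exists>j\<in>{1,2,3}. Zv j \<in> comp F (Cp i x))"
proof -
  have "(\<lambda>u w. {u, w} \<in> F)\<^sup>*\<^sup>* (Cp i x) y" using assms(4) by (simp add: comp_def)
  then show ?thesis
  proof (induction rule: rtranclp_induct)
    case base then show ?case using assms by blast
  next
    case (step z z')
    show ?case
    proof (cases "\<exists>j\<in>{1,2,3}. Zv j \<in> comp F (Cp i x)")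
      case True then show ?thesis by blast
    next
      case False
      then have "\<exists>x''. z = Cp i x'' \<and> x'' \<in> V \<and> x'' \<noteq> a" using step.IH by (elim disjE) simp_all
      then obtain x'' where z: "z = Cp i x''" by (elim exE conjE)
      have "{Cp i x'', z'} \<in> YE" using step(2) z FYE by auto
      from adjC[OF this] show ?thesis
      proof (elim conjE disjE exE bexE)
        fix j assume "j \<in> {1,2,3}" "z' = Zv j" "x'' = idx j"
        moreover have "z' \<in> comp F (Cp i x)"
          using rtranclp.rtrancl_into_rtrancl[OF step(1) step(2)] by (simp add: comp_def)
        ultimately show ?thesis by blast
      qed auto
    qed
  qed
qed

definition B :: "nat \<Rightarrow> 'a set" where
  "B i = {x \<in> V - {a}. \<exists>j\<in>{1,2,3}. Zv j \<in> comp F (Cp i x)}"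

lemma compU:
  assumes "x \<in> V - {a} - B i" "i \<in> {1,2,3}" "y \<in> comp F (Cp i x)"
  shows "\<exists>x'. y = Cp i x' \<and> x' \<in> V - {a} - B i"
proof -
  have nz: "\<not> (\<exists>j\<in>{1,2,3}. Zv j \<in> comp F (Cp i x))" using assms(1) by (auto simp: B_def)
  have "x \<in> V" "x \<noteq> a" using assms(1) by simp_all
  from stay[OF this assms(2,3)] nz have "\<exists>x'. y = Cp i x' \<and> x' \<in> V \<and> x' \<noteq> a" by (elim disjE) simp_all
  then obtain x' where x': "y = Cp i x'" "x' \<in> V" "x' \<noteq> a" by (elim exE conjE)
  have "comp F y = comp F (Cp i x)" using assms(3) by (rule comp_eq)
  then have "comp F (Cp i x') = comp F (Cp i x)" using x'(1) by simp
  then have "x' \<notin> B i" using nz by (simp add: B_def)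
  then show ?thesis using x' by simp
qed

lemma B_sub: "B i \<subseteq> V - {a}" by (auto simp: B_def)

lemma B_mod:
  assumes i: "i \<in> {1,2,3}" and m: "card V mod 6 = 0"
  shows "card (B i) mod 3 = 2"
proof -
  define U where "U = V - {a} - B i"
  define C where "C = (\<lambda>x. comp F (Cp i x)) ` U"
  have finU: "finite U" using finV by (simp add: U_def)
  have UC: "Cp i ` U = \<Union>C"
  proof
    show "Cp i ` U \<subseteq> \<Union>C"
    proof
      fix y assume "y \<in> Cp i ` U"
      then obtain x where x: "x \<in> U" "y = Cp i x" by (elim imageE)
      have "y \<in> comp F (Cp i x)" using x(2) comp_refl by simp
      moreover have "comp F (Cp i x) \<in> C" using x(1) by (simp add: C_def)
      ultimately show "y \<in> \<Union>C" by (rule UnionI[rotated])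
    qed
    show "\<Union>C \<subseteq> Cp i ` U"
    proof
      fix y assume "y \<in> \<Union>C"
      then obtain x where x: "x \<in> U" "y \<in> comp F (Cp i x)" unfolding C_def by (elim UnionE imageE) simp
      from compU[OF x(1)[unfolded U_def] i x(2)] obtain x' where "y = Cp i x'" "x' \<in> U"
        unfolding U_def by (elim exE conjE)
      then show "y \<in> Cp i ` U" by simp
    qed
  qed
  have YVU: "x \<in> U \<Longrightarrow> Cp i x \<in> YV" for x using i by (auto simp: U_def YV_Cp)
  have "3 * card C = card (\<Union>C)"
  proof (rule card_partition)
    show "finite C" using finU by (simp add: C_def)
    show "finite (\<Union>C)" using finU UC[symmetric] by simp
    show "card c = 3" if "c \<in> C" for c
    proof -
      from that obtain x where "x \<in> U" "c = comp F (Cp i x)" unfolding C_def by (elim imageE)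
      then show ?thesis using card3[OF YVU] by simp
    qed
    show "c1 \<inter> c2 = {}" if "c1 \<in> C" "c2 \<in> C" "c1 \<noteq> c2" for c1 c2
    proof (rule ccontr)
      assume "c1 \<inter> c2 \<noteq> {}"
      then obtain z where z: "z \<in> c1" "z \<in> c2" by blast
      from that(1) obtain p where p: "c1 = comp F p" unfolding C_def by (elim imageE) simp
      from that(2) obtain q where q: "c2 = comp F q" unfolding C_def by (elim imageE) simp
      have "comp F z = comp F p" using z(1) p by (simp add: comp_eq)
      moreover have "comp F z = comp F q" using z(2) q by (simp add: comp_eq)
      ultimately show False using that(3) p q by simp
    qed
  qed
  moreover have "card (Cp i ` U) = card U" by (simp add: card_image inj_on_def)
  ultimately have "card U = 3 * card C" using UC by simp
  then have d3: "3 dvd card U" by simp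
  have cU: "card U = card (V - {a}) - card (B i)"
  proof -
    have fB: "finite (B i)" using B_sub finV by (meson finite_Diff finite_subset)
    show ?thesis unfolding U_def by (rule card_Diff_subset[OF fB B_sub])
  qed
  have cV: "card (V - {a}) = card V - 1" using av finV by simp
  have le: "card (B i) \<le> card V - 1" using card_mono[OF _ B_sub] finV cV by simp
  have "card V > 0" using av finV card_gt_0_iff by blast
  from arith1[OF d3 cU[unfolded cV] le this m] show ?thesis .
qed

lemma B_fin: "finite (B i)" using B_sub finV finite_subset by blast

lemma B_sum: "card (B 1) + card (B 2) + card (B 3) \<le> 6"
proof -
  define Q where "Q = comp F (Zv 1) \<union> comp F (Zv 2) \<union> comp F (Zv 3)"
  have c: "card (comp F (Zv j)) = 3 \<and> finite (comp F (Zv j))" if "j \<in> {1,2,3}" for j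
    using card3 that by (simp add: YV_Zv)
  have finQ: "finite Q" using c by (simp add: Q_def)
  have "card Q \<le> 9"
  proof -
    have "card Q \<le> card (comp F (Zv 1) \<union> comp F (Zv 2)) + card (comp F (Zv 3))"
      unfolding Q_def by (rule card_Un_le)
    also have "\<dots> \<le> card (comp F (Zv 1)) + card (comp F (Zv 2)) + card (comp F (Zv 3))"
      by (intro add_right_mono card_Un_le)
    finally show ?thesis using c[of 1] c[of 2] c[of 3] by simp
  qed
  define X where "X = Cp 1 ` B 1 \<union> Cp 2 ` B 2 \<union> Cp 3 ` B 3 \<union> {Zv 1, Zv 2, Zv 3}"
  have "X \<subseteq> Q"
  proof -
    have C: "Cp i x \<in> Q" if "x \<in> B i" for i x
    proof -
      from that obtain j where j: "j \<in> {1,2,3}" "Zv j \<in> comp F (Cp i x)" unfolding B_def by blast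
      have "Cp i x \<in> comp F (Zv j)" using j(2) by (rule comp_sym)
      with j(1) show ?thesis unfolding Q_def by (elim insertE) simp_all
    qed
    have Z: "{Zv 1, Zv 2, Zv 3} \<subseteq> Q"
      using comp_refl[of "Zv 1" F] comp_refl[of "Zv 2" F] comp_refl[of "Zv 3" F] by (simp add: Q_def)
    show ?thesis unfolding X_def
      by (intro Un_least image_subsetI Z) (simp_all add: C)
  qed
  have "card X \<le> 9" using card_mono[OF finQ \<open>X \<subseteq> Q\<close>] \<open>card Q \<le> 9\<close> by simp
  moreover have "card X = card (B 1) + card (B 2) + card (B 3) + 3"

  proof -
    have ci: "card (Cp i ` B i) = card (B i)" for i by (simp add: card_image inj_on_def)
    have f: "finite (Cp i ` B i)" for i using B_fin by simp
    have "card X = card (Cp 1 ` B 1 \<union> Cp 2 ` B 2 \<union> Cp 3 ` B 3) + card {Zv 1, Zv 2, (Zv 3 :: 'a yvert)}"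
      unfolding X_def by (rule card_Un_disjoint) (use f in auto)
    also have "card (Cp 1 ` B 1 \<union> Cp 2 ` B 2 \<union> Cp 3 ` B 3) = card (Cp 1 ` B 1 \<union> Cp 2 ` B 2) + card (Cp 3 ` B 3)"
      by (rule card_Un_disjoint) (use f in auto)
    also have "card (Cp 1 ` B 1 \<union> Cp 2 ` B 2) = card (Cp 1 ` B 1) + card (Cp 2 ` B 2)"
      by (rule card_Un_disjoint) (use f in auto)
    finally show ?thesis using ci by simp
  qed
  ultimately show ?thesis by simp
qed

lemma B2: assumes m: "card V mod 6 = 0" and i: "i \<in> {1,2,3}" shows "card (B i) = 2"
proof -
  have h1: "card (B 1) mod 3 = 2" and h2: "card (B 2) mod 3 = 2" and h3: "card (B 3) mod 3 = 2"
    using B_mod[OF _ m] by simp_all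
  have s: "card (B 1) + card (B 2) + card (B 3) \<le> 6" by (rule B_sum)
  have "card (B 1) = 2" by (rule arith2[OF h1 h2 h3 s])
  moreover have "card (B 2) = 2" by (rule arith2[OF h2 h1 h3]) (use s in simp)
  moreover have "card (B 3) = 2" by (rule arith2[OF h3 h1 h2]) (use s in simp)
  ultimately show ?thesis using i by (elim insertE) simp_all
qed

end
context ysetup begin

definition R :: "nat \<Rightarrow> 'a set set" where "R i = {{x,y} | x y. {Cp i x, Cp i y} \<in> F}"

lemma nbhd_R: "nbhd (R i) z = {y. Cp i y \<in> nbhd F (Cp i z)}"
  unfolding nbhd_def R_def by (auto simp: doubleton_eq_iff insert_commute)

lemma R_E: "R i \<subseteq> E"
proof
  fix e assume "e \<in> R i"
  then obtain x y where e: "e = {x,y}" "{Cp i x, Cp i y} \<in> F" by (auto simp: R_def)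
  then have "{Cp i x, Cp i y} \<in> YE" using FYE by auto
  from adjC[OF this] show "e \<in> E" using e by auto
qed

lemma nbhd_R_a: "nbhd (R i) a = {}"
proof -
  have "False" if "Cp i y \<in> nbhd F (Cp i a)" for y
  proof -
    have "{Cp i a, Cp i y} \<in> YE" using that FYE by (auto simp: nbhd_def)
    from adjC[OF this] show False by simp
  qed
  then show ?thesis by (auto simp: nbhd_R)
qed

lemma nbhd_Un: "nbhd (X \<union> Y) z = nbhd X z \<union> nbhd Y z"
  by (auto simp: nbhd_def)

lemma outside:
  assumes i: "i \<in> {1,2,3}" and z: "z \<in> V - {a} - B i"
  shows "\<exists>u v w. z \<in> {u,v,w} \<and> u\<noteq>v \<and> v\<noteq>w \<and> u\<noteq>w \<and>
     nbhd (R i) u = {v} \<and> nbhd (R i) v = {u,w} \<and> nbhd (R i) w = {v} \<and>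
     u \<in> V - {a} - B i \<and> v \<in> V - {a} - B i \<and> w \<in> V - {a} - B i"
proof -
  have "Cp i z \<in> YV" using i z by (simp add: YV_Cp)
  from loc[OF this] obtain u0 v0 w0 where h: "comp F (Cp i z) = {u0,v0,w0}" "u0\<noteq>v0" "v0\<noteq>w0" "u0\<noteq>w0"
     "nbhd F u0 = {v0}" "nbhd F v0 = {u0,w0}" "nbhd F w0 = {v0}" by (elim exE conjE)
  have "u0 \<in> comp F (Cp i z)" "v0 \<in> comp F (Cp i z)" "w0 \<in> comp F (Cp i z)" unfolding h(1) by simp_all
  from compU[OF z i this(1)] obtain u where u: "u0 = Cp i u" "u \<in> V - {a} - B i" by (elim exE conjE)
  from compU[OF z i \<open>v0 \<in> comp F (Cp i z)\<close>] obtain v where v: "v0 = Cp i v" "v \<in> V - {a} - B i" by (elim exE conjE)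
  from compU[OF z i \<open>w0 \<in> comp F (Cp i z)\<close>] obtain w where w: "w0 = Cp i w" "w \<in> V - {a} - B i" by (elim exE conjE)
  have "Cp i z \<in> comp F (Cp i z)" by (rule comp_refl)
  then have "Cp i z \<in> {u0,v0,w0}" unfolding h(1) .
  then have zz: "z \<in> {u,v,w}" using u(1) v(1) w(1) by simp
  have n1: "nbhd (R i) u = {v}" using h(5) u(1) v(1) by (simp add: nbhd_R)
  have n2: "nbhd (R i) v = {u,w}" using h(6) u(1) v(1) w(1) by (simp add: nbhd_R) blast
  have n3: "nbhd (R i) w = {v}" using h(7) w(1) v(1) by (simp add: nbhd_R)
  have dd: "u \<noteq> v" "v \<noteq> w" "u \<noteq> w" using h(2,3,4) u(1) v(1) w(1) by auto
  show ?thesis apply (rule exI[of _ u], rule exI[of _ v], rule exI[of _ w])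
    using zz n1 n2 n3 dd u(2) v(2) w(2) by simp
qed

lemma assemble:
  assumes i: "i \<in> {1,2,3}" and XE: "X \<subseteq> E" and X2: "\<forall>e\<in>X. e \<subseteq> insert a (B i)"
    and P: "\<forall>x\<in>insert a (B i). \<exists>u v w. x \<in> {u,v,w} \<and> u\<noteq>v \<and> v\<noteq>w \<and> u\<noteq>w \<and>
     nbhd (X \<union> R i) u = {v} \<and> nbhd (X \<union> R i) v = {u,w} \<and> nbhd (X \<union> R i) w = {v}"
  shows "lambda_factor V E (X \<union> R i)"
proof (rule local_lf)
  show XR: "X \<union> R i \<subseteq> E" using XE R_E by auto
  show "\<forall>e\<in>X \<union> R i. \<exists>x y. x \<noteq> y \<and> e = {x, y}" using XR E2 by blast
  have nb: "nbhd (X \<union> R i) z = nbhd (R i) z" if "z \<notin> insert a (B i)" for z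
  proof -
    have "nbhd X z = {}" using X2 that by (auto simp: nbhd_def)
    then show ?thesis by (simp add: nbhd_Un)
  qed
  show "\<forall>x\<in>V. \<exists>u v w. x \<in> {u,v,w} \<and> u\<noteq>v \<and> v\<noteq>w \<and> u\<noteq>w \<and>
     nbhd (X \<union> R i) u = {v} \<and> nbhd (X \<union> R i) v = {u,w} \<and> nbhd (X \<union> R i) w = {v}"
  proof
    fix x assume x: "x \<in> V"
    show "\<exists>u v w. x \<in> {u,v,w} \<and> u\<noteq>v \<and> v\<noteq>w \<and> u\<noteq>w \<and>
     nbhd (X \<union> R i) u = {v} \<and> nbhd (X \<union> R i) v = {u,w} \<and> nbhd (X \<union> R i) w = {v}"
    proof (cases "x \<in> insert a (B i)")
      case True then show ?thesis using P by blast
    next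
      case False
      then have "x \<in> V - {a} - B i" using x by auto
      from outside[OF i this] obtain u v w where o: "x \<in> {u,v,w}" "u\<noteq>v" "v\<noteq>w" "u\<noteq>w"
        "nbhd (R i) u = {v}" "nbhd (R i) v = {u,w}" "nbhd (R i) w = {v}"
        "u \<in> V - {a} - B i" "v \<in> V - {a} - B i" "w \<in> V - {a} - B i" by blast
      have "nbhd (X \<union> R i) u = {v}" "nbhd (X \<union> R i) v = {u,w}" "nbhd (X \<union> R i) w = {v}"
        using nb o by auto
      then show ?thesis using o by blast
    qed
  qed
qed

end
context ysetup begin

lemma Cp_eq_comp: "Cp i x \<in> comp F (Zv j) \<Longrightarrow> x \<in> V - {a} \<Longrightarrow> j \<in> {1,2,3} \<Longrightarrow> x \<in> B i"
proof -
  assume h: "Cp i x \<in> comp F (Zv j)" "x \<in> V - {a}" "j \<in> {1,2,3}"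
  have "Zv j \<in> comp F (Cp i x)" using h(1) by (rule comp_sym)
  then have "\<exists>j\<in>{1,2,3}. Zv j \<in> comp F (Cp i x)" using h(3) by (rule bexI)
  then show ?thesis using h(2) unfolding B_def by simp
qed

lemma nb_edge: "z \<in> nbhd F y \<Longrightarrow> {y,z} \<in> YE"
  using FYE by (auto simp: nbhd_def)

lemma comp_mem_eq: "y \<in> comp F x \<Longrightarrow> comp F x = S \<Longrightarrow> comp F y = S"
  using comp_eq by metis

lemma main_contra:
  assumes m: "card V mod 6 = 0"
  shows "\<exists>F'. lambda_factor V E F' \<and> {a,a1} \<in> F'"
proof -
  have i1: "idx 1 = a1" by (simp add: idx_def)
  have a1V: "a1 \<in> V" "a1 \<noteq> a" using idx_V[of 1] unfolding i1 by simp_all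
  have Z1: "Zv 1 \<in> YV" by (simp add: YV_Zv)
  from loc2[OF Z1] obtain u v w where cZ: "comp F (Zv 1) = {u,v,w}" and d: "u\<noteq>v" "v\<noteq>w" "u\<noteq>w"
    and nu: "nbhd F u = {v}" and nv: "nbhd F v = {u,w}" and nw: "nbhd F w = {v}"
    and zz: "Zv 1 = u \<or> Zv 1 = v" by (elim exE conjE)
  have euv: "{u,v} \<in> YE" using nb_edge[of v u] nu by simp
  have evw: "{w,v} \<in> YE" using nb_edge[of v w] nw by simp
  have euw: "{v,u} \<in> YE" using nb_edge[of u v] nv by simp
  have evw2: "{v,w} \<in> YE" using nb_edge[of w v] nv by simp
  from zz show ?thesis
  proof
    assume zu: "Zv 1 = u"
    from adjZ[of 1 v] euv zu obtain i where i: "i \<in> {1,2,3}" and v: "v = Cp i a1"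
      unfolding i1 by auto
    have "{Cp i a1, w} \<in> YE" using evw2 v by simp
    from adjC[OF this] have "(\<exists>y. w = Cp i y \<and> {a1,y} \<in> E \<and> y \<noteq> a \<and> y \<in> V) \<or> (\<exists>j\<in>{1,2,3}. w = Zv j \<and> a1 = idx j)"
      by simp
    moreover have "\<not> (\<exists>j\<in>{1,2,3}. w = Zv j \<and> a1 = idx j)"
    proof
      assume "\<exists>j\<in>{1,2,3}. w = Zv j \<and> a1 = idx j"
      then obtain j where j: "j \<in> {1,2,3}" "w = Zv j" "a1 = idx j" by (elim bexE conjE)
      have "j = 1" using idx_inj[of 1 j] i1 j by simp
      then show False using j(2) zu d by simp
    qed
    ultimately have "\<exists>y. w = Cp i y \<and> {a1,y} \<in> E \<and> y \<noteq> a \<and> y \<in> V" by (rule orNot)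
    then obtain b where w: "w = Cp i b" and b: "b \<noteq> a" "b \<in> V" by (elim exE conjE)
    have ba1: "b \<noteq> a1" using d(2) v w by simp
    have "Cp i a1 \<in> comp F (Zv 1)" using cZ v by simp
    then have A1: "a1 \<in> B i" using Cp_eq_comp[of i a1 1] a1V by simp
    have "Cp i b \<in> comp F (Zv 1)" using cZ w by simp
    then have Bb: "b \<in> B i" using Cp_eq_comp[of i b 1] b by simp
    have Bi: "B i = {a1, b}"
    proof (rule sym, rule card_subset_eq[OF B_fin])
      show "{a1, b} \<subseteq> B i" using A1 Bb by simp
      show "card {a1, b} = card (B i)" using B2[OF m i] ba1 by simp
    qed
    define X where "X = {{a,a1}}"
    have nF1: "nbhd F (Cp i a1) = {Zv 1, Cp i b}" using nv zu v w by simp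
    have nF2: "nbhd F (Cp i b) = {Cp i a1}" using nw v w by simp
    have nX1: "nbhd X a = {a1}" using a1V by (auto simp: X_def nbhd_def doubleton_eq_iff)
    have nX2: "nbhd X a1 = {a}" using a1V by (auto simp: X_def nbhd_def doubleton_eq_iff)
    have nX3: "nbhd X b = {}" using a1V ba1 b by (auto simp: X_def nbhd_def doubleton_eq_iff)
    have nR2: "nbhd (R i) a1 = {b}" by (simp add: nbhd_R nF1)
    have nR3: "nbhd (R i) b = {a1}" by (simp add: nbhd_R nF2)
    have n1: "nbhd (X \<union> R i) a = {a1}" by (simp add: nbhd_Un nbhd_R_a nX1)
    have n2: "nbhd (X \<union> R i) a1 = {a,b}" by (simp add: nbhd_Un nX2 nR2 insert_commute)
    have n3: "nbhd (X \<union> R i) b = {a1}" by (simp add: nbhd_Un nX3 nR3)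
    have "lambda_factor V E (X \<union> R i)"
    proof (rule assemble[OF i])
      show "X \<subseteq> E" using idx_E[of 1] i1 by (simp add: X_def)
      show "\<forall>e\<in>X. e \<subseteq> insert a (B i)" using Bi by (simp add: X_def)
      show "\<forall>x\<in>insert a (B i). \<exists>u v w. x \<in> {u,v,w} \<and> u\<noteq>v \<and> v\<noteq>w \<and> u\<noteq>w \<and>
        nbhd (X \<union> R i) u = {v} \<and> nbhd (X \<union> R i) v = {u,w} \<and> nbhd (X \<union> R i) w = {v}"
      proof
        fix x assume "x \<in> insert a (B i)"
        then have xin: "x \<in> {a,a1,b}" using Bi by simp
        show "\<exists>u v w. x \<in> {u,v,w} \<and> u\<noteq>v \<and> v\<noteq>w \<and> u\<noteq>w \<and>
          nbhd (X \<union> R i) u = {v} \<and> nbhd (X \<union> R i) v = {u,w} \<and> nbhd (X \<union> R i) w = {v}"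
          apply (rule exI[of _ a], rule exI[of _ a1], rule exI[of _ b])
          using xin n1 n2 n3 a1V ba1 b by simp
      qed
    qed
    moreover have "{a,a1} \<in> X \<union> R i" by (simp add: X_def)
    ultimately show ?thesis by (rule exI[where P = "\<lambda>F'. lambda_factor V E F' \<and> {a,a1} \<in> F'", OF conjI])
  next
    assume zv: "Zv 1 = v"
    from adjZ[of 1 u] euw zv obtain i where i: "i \<in> {1,2,3}" and u: "u = Cp i a1"
      unfolding i1 by auto
    from adjZ[of 1 w] evw2 zv obtain k where k: "k \<in> {1,2,3}" and w: "w = Cp k a1"
      unfolding i1 by auto
    have nF1: "nbhd F (Cp i a1) = {Zv 1}" using nu u zv by simp
    have "Cp i a1 \<in> comp F (Zv 1)" using cZ u by simp
    then have A1: "a1 \<in> B i" using Cp_eq_comp[of i a1 1] a1V by simp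
    have "card (B i - {a1}) = 1" using B2[OF m i] A1 B_fin[of i] by simp
    then obtain y where y1: "B i - {a1} = {y}" by (rule card_1_singletonE)
    have Bi: "B i = {a1, y}" using y1 A1 by blast
    have ya: "y \<noteq> a1" using y1 by blast
    have "y \<in> B i" using Bi by simp
    then obtain j where j: "j \<in> {1,2,3}" and yj: "Zv j \<in> comp F (Cp i y)" and yV: "y \<in> V" "y \<noteq> a"
      unfolding B_def by blast
    have cyj: "Cp i y \<in> comp F (Zv j)" using yj by (rule comp_sym)
    have j1: "j \<noteq> 1"
    proof
      assume "j = 1"
      then have "Cp i y \<in> {u,v,w}" using cyj cZ by simp
      then show False using u w zv ya by auto
    qed
    have Zj: "Zv j \<in> YV" using j by (simp add: YV_Zv)
    from loc2[OF Zj] obtain u' v' w' where cZ': "comp F (Zv j) = {u',v',w'}" and d': "u'\<noteq>v'" "v'\<noteq>w'" "u'\<noteq>w'"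
      and nu': "nbhd F u' = {v'}" and nv': "nbhd F v' = {u',w'}" and nw': "nbhd F w' = {v'}"
      and zz': "Zv j = u' \<or> Zv j = v'" by (elim exE conjE)
    have euv': "{u',v'} \<in> YE" using nb_edge[of v' u'] nu' by simp
    have euw': "{v',u'} \<in> YE" using nb_edge[of u' v'] nv' by simp
    have evw2': "{v',w'} \<in> YE" using nb_edge[of w' v'] nv' by simp
    have ijV: "idx j \<in> V" "idx j \<noteq> a" using idx_V[OF j] by simp_all
    have ija1: "idx j \<noteq> a1" using idx_inj[of 1 j] j j1 i1 by auto
    from zz' show ?thesis
    proof
      assume zu': "Zv j = u'"
      from adjZ[of j v'] euv' zu' obtain p where p: "p \<in> {1,2,3}" and v': "v' = Cp p (idx j)"
        by auto
      have "{Cp p (idx j), w'} \<in> YE" using evw2' v' by simp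
      from adjC[OF this] have "(\<exists>y. w' = Cp p y \<and> {idx j,y} \<in> E \<and> y \<noteq> a \<and> y \<in> V) \<or> (\<exists>j'\<in>{1,2,3}. w' = Zv j' \<and> idx j = idx j')"
        by simp
      moreover have "\<not> (\<exists>j'\<in>{1,2,3}. w' = Zv j' \<and> idx j = idx j')"
      proof
        assume "\<exists>j'\<in>{1,2,3}. w' = Zv j' \<and> idx j = idx j'"
        then obtain j' where jj: "j' \<in> {1,2,3}" "w' = Zv j'" "idx j = idx j'" by (elim bexE conjE)
        have "j' = j" using idx_inj[of j j'] j jj by simp
        then show False using jj(2) zu' d' by simp
      qed
      ultimately have "\<exists>y. w' = Cp p y \<and> {idx j,y} \<in> E \<and> y \<noteq> a \<and> y \<in> V" by (rule orNot)
      then obtain x2 where w': "w' = Cp p x2" and x2: "x2 \<noteq> a" "x2 \<in> V" by (elim exE conjE)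
      have "Cp i y \<in> {u',v',w'}" using cyj cZ' by simp
      then have pi: "p = i" using zu' v' w' by auto
      have "Cp i (idx j) \<in> comp F (Zv j)" using cZ' v' pi by simp
      then have m1: "idx j \<in> B i" using Cp_eq_comp[of i "idx j" j] ijV j by simp
      have "Cp i x2 \<in> comp F (Zv j)" using cZ' w' pi by simp
      then have m2: "x2 \<in> B i" using Cp_eq_comp[of i x2 j] x2 j by simp
      have x2j: "x2 \<noteq> idx j" using d'(2) v' w' by simp
      have x2a1: "x2 \<noteq> a1"
      proof
        assume "x2 = a1"
        then have "Cp i a1 \<in> comp F (Zv j)" using cZ' w' pi by simp
        then have "comp F (Cp i a1) = comp F (Zv j)" by (rule comp_eq)
        moreover have "Cp i a1 \<in> comp F (Zv 1)" using cZ u by simp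
        then have "comp F (Cp i a1) = comp F (Zv 1)" by (rule comp_eq)
        ultimately have "comp F (Zv j) = {u,v,w}" using cZ by simp
        moreover have "Zv j \<in> comp F (Zv j)" by (rule comp_refl)
        ultimately have "Zv j \<in> {u,v,w}" by simp
        then show False using u w zv j1 by auto
      qed
      have "idx j \<in> {a1,y}" "x2 \<in> {a1,y}" using m1 m2 Bi by simp_all
      then show ?thesis using x2j x2a1 ija1 by auto
    next
      assume zv': "Zv j = v'"
      from adjZ[of j u'] euw' zv' obtain p where p: "p \<in> {1,2,3}" and u': "u' = Cp p (idx j)"
        by auto
      from adjZ[of j w'] evw2' zv' obtain q where q: "q \<in> {1,2,3}" and w': "w' = Cp q (idx j)"
        by auto
      have "Cp i y \<in> {u',v',w'}" using cyj cZ' by simp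
      then have yij: "y = idx j" and pq: "p = i \<or> q = i" using zv' u' w' by auto
      have nF2: "nbhd F (Cp i (idx j)) = {Zv j}" using pq nu' nw' u' w' zv' by auto
      define X where "X = {{a,a1},{a,idx j}}"
      have nX1: "nbhd X a = {a1, idx j}" using a1V ijV by (auto simp: X_def nbhd_def doubleton_eq_iff)
      have nX2: "nbhd X a1 = {a}" using a1V ija1 by (auto simp: X_def nbhd_def doubleton_eq_iff)
      have nX3: "nbhd X (idx j) = {a}" using ijV ija1 by (auto simp: X_def nbhd_def doubleton_eq_iff)
      have nR2: "nbhd (R i) a1 = {}" by (simp add: nbhd_R nF1)
      have nR3: "nbhd (R i) (idx j) = {}" by (simp add: nbhd_R nF2)
      have n1: "nbhd (X \<union> R i) a = {a1, idx j}" by (simp add: nbhd_Un nbhd_R_a nX1)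
      have n2: "nbhd (X \<union> R i) a1 = {a}" by (simp add: nbhd_Un nX2 nR2 insert_commute)
      have n3: "nbhd (X \<union> R i) (idx j) = {a}" by (simp add: nbhd_Un nX3 nR3)
      have "lambda_factor V E (X \<union> R i)"
      proof (rule assemble[OF i])
        show "X \<subseteq> E" using idx_E[of 1] idx_E[OF j] i1 by (simp add: X_def)
        show "\<forall>e\<in>X. e \<subseteq> insert a (B i)" using Bi yij by (simp add: X_def)
        show "\<forall>x\<in>insert a (B i). \<exists>u v w. x \<in> {u,v,w} \<and> u\<noteq>v \<and> v\<noteq>w \<and> u\<noteq>w \<and>
          nbhd (X \<union> R i) u = {v} \<and> nbhd (X \<union> R i) v = {u,w} \<and> nbhd (X \<union> R i) w = {v}"
        proof
          fix x assume "x \<in> insert a (B i)"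
          then have xin: "x \<in> {a1,a,idx j}" using Bi yij by auto
          show "\<exists>u v w. x \<in> {u,v,w} \<and> u\<noteq>v \<and> v\<noteq>w \<and> u\<noteq>w \<and>
            nbhd (X \<union> R i) u = {v} \<and> nbhd (X \<union> R i) v = {u,w} \<and> nbhd (X \<union> R i) w = {v}"
            apply (rule exI[of _ a1], rule exI[of _ a], rule exI[of _ "idx j"])
            using xin n1 n2 n3 a1V ija1 ijV by simp
        qed
      qed
      moreover have "{a,a1} \<in> X \<union> R i" by (simp add: X_def)
      ultimately show ?thesis by (rule exI[where P = "\<lambda>F'. lambda_factor V E F' \<and> {a,a1} \<in> F'", OF conjI])
    qed
  qed
qed

end

lemma card_YV:
  assumes "finite V" "a \<in> V"
  shows "card (Y_V V a) = 3 * card V"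
proof -
  have eq: "Y_V V a = (\<lambda>(i,x). Cp i x) ` ({1,2,3::nat} \<times> (V-{a})) \<union> Zv ` {1,2,3}"
    by (auto simp: Y_V_def)
  have c1: "card ((\<lambda>(i,x). Cp i x) ` ({1,2,3::nat} \<times> (V-{a}))) = 3 * (card V - 1)"
  proof -
    have inj: "inj_on (\<lambda>(i,x). Cp i x) ({1,2,3::nat} \<times> (V-{a}))" by (auto simp: inj_on_def)
    have "card ({1,2,3::nat} \<times> (V-{a})) = card {1,2,3::nat} * card (V - {a})" by (rule card_cartesian_product)
    also have "\<dots> = 3 * (card V - 1)" using assms by simp
    finally show ?thesis using card_image[OF inj] by simp
  qed
  have c2: "card (Zv ` {1,2,3::nat}) = 3" by simp
  have "card (Y_V V a) = card ((\<lambda>(i,x). Cp i x) ` ({1,2,3::nat} \<times> (V-{a}))) + card (Zv ` {1,2,3::nat})"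
    unfolding eq by (subst card_Un_disjoint) (auto simp: assms)
  then have "card (Y_V V a) = 3 * (card V - 1) + 3" unfolding c1 c2 .
  moreover have "card V > 0" using assms card_gt_0_iff by blast
  ultimately show ?thesis by simp
qed

theorem mainTheorem8:
  fixes V :: "'a set" and E :: "'a set set" and a a1 a2 a3 :: 'a
  assumes "cubic V E"
    and "card V mod 6 = 0"
    and "a \<in> V"
    and "a1 \<noteq> a2" and "a1 \<noteq> a3" and "a2 \<noteq> a3"
    and "nbhd E a = {a1, a2, a3}"
    and "\<not> (\<exists>F. lambda_factor V E F \<and> {a, a1} \<in> F)"
  shows "card (Y_V V a) mod 6 = 0 \<and>
         \<not> (\<exists>F. lambda_factor (Y_V V a) (Y_E E a a1 a2 a3) F)"
proof
  have "finite V" using assms(1) by (simp add: cubic_def simple_graph_def)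
  then show "card (Y_V V a) mod 6 = 0" using card_YV[of V a] assms(2,3) by auto
  show "\<not> (\<exists>F. lambda_factor (Y_V V a) (Y_E E a a1 a2 a3) F)"
  proof
    assume "\<exists>F. lambda_factor (Y_V V a) (Y_E E a a1 a2 a3) F"
    then obtain F where "lambda_factor (Y_V V a) (Y_E E a a1 a2 a3) F" by blast
    then interpret ysetup V E a a1 a2 a3 F using assms by unfold_locales
    show False using main_contra[OF assms(2)] assms(8) by blast
  qed
qed

end
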